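(* Consider the ISQA framework described in the context for $\min_xF(x)=f(x)+\Psi(x)$ with an arbitrary $x^0\in\mathcal{H}$. Assume the solution set $\Omega$ is nonempty, $f$ is convex and $L$-smooth for some $L>0$, $\Psi$ is convex, proper and lower semicontinuous, there are $M\ge m>0$ with $MI\succeq H_t\succeq mI$ for all $t$, there is $\eta\in[0,1)$ such that $Q_t(p^t)-Q_t^*\le-\eta Q_t^*$ for all $t$, and there are $\xi,\zeta>0$ and $\theta\in(1/4,1]$ such that $$\zeta\operatorname{dist}(x,\Omega)\le\big(F(x)-F^*\big)^{\theta}\quad\text{for all }x\text{ with }F(x)-F^*\le\xi.$$ Then $x^t\to x^*$ for some $x^*\in\Omega$.
   Context: $\mathcal{H}$ is a Euclidean space; $F^*$ is the minimum value of $F$ and $\Omega$ its set of minimizers; $\operatorname{dist}(x,\Omega)=\min_{y\in\Omega}\|x-y\|$. $f$ is $L$-smooth if differentiable with $L$-Lipschitz gradient. ISQA framework: given $x^0$ and $\gamma,\beta\in(0,1)$, for $t=0,1,\dots$: choose a self-adjoint positive semidefinite linear operator $H_t$; let $Q_t(p):=\langle\nabla f(x^t),p\rangle+\tfrac12\langle p,H_tp\rangle+\Psi(x^t+p)-\Psi(x^t)$ and $Q_t^*:=\min_pQ_t(p)$; compute an approximate minimizer $p^t$; let $\alpha_t$ be the largest element of $\{1,\beta,\beta^2,\dots\}$ with $F(x^t+\alpha_tp^t)\le F(x^t)+\gamma\alpha_tQ_t(p^t)$; set $x^{t+1}=x^t+\alpha_tp^t$. *)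

theory Defs
  imports "HOL-Analysis.Analysis"
begin

definition ext_convex :: "('a::real_vector \<Rightarrow> ereal) \<Rightarrow> bool" where
  "ext_convex \<Psi> \<longleftrightarrow> (\<forall>x y u. 0 \<le> u \<and> u \<le> 1 \<longrightarrow>
      \<Psi> ((1 - u) *\<^sub>R x + u *\<^sub>R y) \<le> ereal (1 - u) * \<Psi> x + ereal u * \<Psi> y)"

definition ext_proper :: "('a \<Rightarrow> ereal) \<Rightarrow> bool" where
  "ext_proper \<Psi> \<longleftrightarrow> (\<forall>x. \<Psi> x \<noteq> -\<infinity>) \<and> (\<exists>x. \<Psi> x \<noteq> \<infinity>)"

definition ext_lsc :: "('a::topological_space \<Rightarrow> ereal) \<Rightarrow> bool" where
  "ext_lsc \<Psi> \<longleftrightarrow> (\<forall>c. closed {x. \<Psi> x \<le> c})"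

definition L_smooth :: "real \<Rightarrow> ('a::euclidean_space \<Rightarrow> real) \<Rightarrow> ('a \<Rightarrow> 'a) \<Rightarrow> bool" where
  "L_smooth L f g \<longleftrightarrow> (\<forall>x. (f has_derivative (\<lambda>h. g x \<bullet> h)) (at x))
       \<and> (\<forall>x y. norm (g x - g y) \<le> L * norm (x - y))"

definition Fobj :: "('a \<Rightarrow> real) \<Rightarrow> ('a \<Rightarrow> ereal) \<Rightarrow> 'a \<Rightarrow> ereal" where
  "Fobj f \<Psi> x = ereal (f x) + \<Psi> x"

definition Qmodel :: "('a::euclidean_space \<Rightarrow> 'a) \<Rightarrow> ('a \<Rightarrow> ereal) \<Rightarrow> ('a \<Rightarrow> 'a) \<Rightarrow> 'a \<Rightarrow> 'a \<Rightarrow> ereal" where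
  "Qmodel g \<Psi> H x p = ereal (g x \<bullet> p + (1/2) * (p \<bullet> H p)) + \<Psi> (x + p) - \<Psi> x"

definition Qstar :: "('a::euclidean_space \<Rightarrow> 'a) \<Rightarrow> ('a \<Rightarrow> ereal) \<Rightarrow> ('a \<Rightarrow> 'a) \<Rightarrow> 'a \<Rightarrow> ereal" where
  "Qstar g \<Psi> H x = (INF p. Qmodel g \<Psi> H x p)"

end

theory Submission
  imports Defs
begin


lemma descent:
  fixes f :: "'a::euclidean_space \<Rightarrow> real"
  assumes "L_smooth L f g" "L \<ge> 0"
  shows "\<bar>f y - f x - g x \<bullet> (y - x)\<bar> \<le> L * (norm (y - x))\<^sup>2"
proof -
  define h where "h = y - x"
  have der: "\<And>z. (f has_derivative (\<lambda>v. g z \<bullet> v)) (at z)"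
    and lip: "\<And>a b. norm (g a - g b) \<le> L * norm (a - b)"
    using assms unfolding L_smooth_def by auto
  have d1: "((\<lambda>t. f (x + t *\<^sub>R h)) has_derivative (\<lambda>s. g (x + t *\<^sub>R h) \<bullet> (s *\<^sub>R h))) (at t within {0..1})" for t :: real
  proof -
    have "((\<lambda>t. x + t *\<^sub>R h) has_derivative (\<lambda>s. s *\<^sub>R h)) (at t within {0..1})"
      by (auto intro!: derivative_eq_intros)
    from has_derivative_in_compose[OF this der[of "x + t *\<^sub>R h", THEN has_derivative_at_withinI]]
    show ?thesis by (simp add: o_def)
  qed
  obtain t where t: "t \<in> {0..1}" and eq: "f (x + 1 *\<^sub>R h) - f (x + 0 *\<^sub>R h) = g (x + t *\<^sub>R h) \<bullet> ((1 - 0) *\<^sub>R h)"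
    using mvt_very_simple[of 0 1 "\<lambda>t. f (x + t *\<^sub>R h)", OF _ d1] by auto
  have "f y - f x - g x \<bullet> (y - x) = (g (x + t *\<^sub>R h) - g x) \<bullet> h"
    using eq by (simp add: h_def inner_diff_left)
  also have "\<bar>\<dots>\<bar> \<le> norm (g (x + t *\<^sub>R h) - g x) * norm h"
    by (rule Cauchy_Schwarz_ineq2)
  also have "\<dots> \<le> (L * norm (t *\<^sub>R h)) * norm h"
    using lip[of "x + t *\<^sub>R h" x] by (intro mult_right_mono) auto
  also have "\<dots> \<le> L * (norm h)\<^sup>2"
  proof -
    have "L \<ge> 0" using assms(2) .
    hence "L * norm (t *\<^sub>R h) \<le> L * norm h" using t by (auto intro!: mult_left_mono simp: mult_left_le_one_le)
    from mult_right_mono[OF this norm_ge_zero[of h]] show ?thesis by (simp add: power2_eq_square)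
  qed
  finally show ?thesis by (simp add: h_def)
qed




locale isqa =
  fixes f :: "'a::euclidean_space \<Rightarrow> real" and g :: "'a \<Rightarrow> 'a"
    and \<Psi> :: "'a \<Rightarrow> ereal"
    and L m M \<eta> \<xi> \<zeta> \<theta> \<gamma> \<beta> :: real
    and H :: "nat \<Rightarrow> 'a \<Rightarrow> 'a" and x p :: "nat \<Rightarrow> 'a" and \<alpha> :: "nat \<Rightarrow> real"
    and Fstar :: ereal and \<Omega> :: "'a set"
  assumes Fstar_def: "Fstar = (INF y. Fobj f \<Psi> y)"
    and \<Omega>_def: "\<Omega> = {y. Fobj f \<Psi> y = Fstar}"
    and \<Omega>_ne: "\<Omega> \<noteq> {}"
    and f_convex: "convex_on UNIV f"
    and L_pos: "L > 0" and f_smooth: "L_smooth L f g"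
    and \<Psi>_convex: "ext_convex \<Psi>" and \<Psi>_proper: "ext_proper \<Psi>" and \<Psi>_lsc: "ext_lsc \<Psi>"
    and \<gamma>: "0 < \<gamma>" "\<gamma> < 1" and \<beta>: "0 < \<beta>" "\<beta> < 1"
    and x0_dom: "\<Psi> (x 0) \<noteq> \<infinity>"
    and mM: "0 < m" "m \<le> M"
    and H_lin: "\<And>t. linear (H t)"
    and H_sa: "\<And>t u v. H t u \<bullet> v = u \<bullet> H t v"
    and H_bounds: "\<And>t v. m * (norm v)\<^sup>2 \<le> v \<bullet> H t v \<and> v \<bullet> H t v \<le> M * (norm v)\<^sup>2"
    and \<eta>: "0 \<le> \<eta>" "\<eta> < 1"
    and inexact: "\<And>t. Qmodel g \<Psi> (H t) (x t) (p t) - Qstar g \<Psi> (H t) (x t)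
                        \<le> - ereal \<eta> * Qstar g \<Psi> (H t) (x t)"
    and \<alpha>_def: "\<And>t. \<alpha> t = \<beta> ^ (LEAST k. Fobj f \<Psi> (x t + (\<beta> ^ k) *\<^sub>R p t)
                        \<le> Fobj f \<Psi> (x t) + ereal (\<gamma> * \<beta> ^ k) * Qmodel g \<Psi> (H t) (x t) (p t))"
    and x_step: "\<And>t. x (Suc t) = x t + \<alpha> t *\<^sub>R p t"
    and \<xi>\<zeta>: "\<xi> > 0" "\<zeta> > 0" and \<theta>: "1/4 < \<theta>" "\<theta> \<le> 1"
    and error_bound: "\<And>y. Fobj f \<Psi> y - Fstar \<le> ereal \<xi> \<Longrightarrow>
                        \<zeta> * infdist y \<Omega> \<le> (real_of_ereal (Fobj f \<Psi> y - Fstar)) powr \<theta>"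
begin

abbreviation psi where "psi y \<equiv> real_of_ereal (\<Psi> y)"
abbreviation Fs where "Fs \<equiv> real_of_ereal Fstar"
abbreviation Fr where "Fr y \<equiv> f y + psi y"

lemma Psi_ninf: "\<Psi> y \<noteq> -\<infinity>"
  using \<Psi>_proper unfolding ext_proper_def by auto

lemma Psi_fin: "\<Psi> y \<noteq> \<infinity> \<Longrightarrow> \<Psi> y = ereal (psi y)"
  using Psi_ninf[of y] by (cases "\<Psi> y") auto

lemma Fobj_fin: "\<Psi> y \<noteq> \<infinity> \<Longrightarrow> Fobj f \<Psi> y = ereal (Fr y)"
  unfolding Fobj_def by (subst Psi_fin) auto

lemma Fobj_inf: "\<Psi> y = \<infinity> \<Longrightarrow> Fobj f \<Psi> y = \<infinity>"
  unfolding Fobj_def by simp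

lemma Fstar_le: "Fstar \<le> Fobj f \<Psi> y"
  unfolding Fstar_def by (rule INF_lower) simp

lemma Fstar_fin: "Fstar = ereal Fs"
proof -
  obtain w where w: "w \<in> \<Omega>" using \<Omega>_ne by auto
  hence "Fobj f \<Psi> w = Fstar" using \<Omega>_def by auto
  moreover have "Fobj f \<Psi> w \<noteq> -\<infinity>" unfolding Fobj_def using Psi_ninf[of w] by auto
  moreover have "Fstar \<noteq> \<infinity>" using Fstar_le[of "x 0"] Fobj_fin[OF x0_dom] by auto
  ultimately show ?thesis by (cases Fstar) auto
qed

lemma Fs_le: "\<Psi> y \<noteq> \<infinity> \<Longrightarrow> Fs \<le> Fr y"
proof -
  assume a: "\<Psi> y \<noteq> \<infinity>"
  have "ereal Fs \<le> ereal (Fr y)" using Fstar_le[of y] Fobj_fin[OF a] Fstar_fin by metis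
  thus ?thesis by simp
qed

lemma Omega_char: "y \<in> \<Omega> \<longleftrightarrow> \<Psi> y \<noteq> \<infinity> \<and> Fr y = Fs"
proof
  assume "y \<in> \<Omega>"
  hence e: "Fobj f \<Psi> y = Fstar" using \<Omega>_def by auto
  have "\<Psi> y \<noteq> \<infinity>" using e Fobj_inf[of y] Fstar_fin by auto
  thus "\<Psi> y \<noteq> \<infinity> \<and> Fr y = Fs" using e Fobj_fin[of y] Fstar_fin by auto
next
  assume "\<Psi> y \<noteq> \<infinity> \<and> Fr y = Fs"
  thus "y \<in> \<Omega>" using \<Omega>_def Fobj_fin[of y] Fstar_fin by auto
qed

lemma psi_conv:
  assumes "\<Psi> a \<noteq> \<infinity>" "\<Psi> b \<noteq> \<infinity>" "0 \<le> u" "u \<le> 1"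
  shows "\<Psi> ((1 - u) *\<^sub>R a + u *\<^sub>R b) \<noteq> \<infinity> \<and>
         psi ((1 - u) *\<^sub>R a + u *\<^sub>R b) \<le> (1 - u) * psi a + u * psi b"
proof -
  have "\<Psi> ((1 - u) *\<^sub>R a + u *\<^sub>R b) \<le> ereal (1 - u) * \<Psi> a + ereal u * \<Psi> b"
    using \<Psi>_convex assms(3,4) unfolding ext_convex_def by blast
  also have "\<dots> = ereal ((1 - u) * psi a + u * psi b)"
    using Psi_fin[OF assms(1)] Psi_fin[OF assms(2)] by (metis plus_ereal.simps(1) times_ereal.simps(1))
  finally have le: "\<Psi> ((1 - u) *\<^sub>R a + u *\<^sub>R b) \<le> ereal ((1 - u) * psi a + u * psi b)" .
  hence fin: "\<Psi> ((1 - u) *\<^sub>R a + u *\<^sub>R b) \<noteq> \<infinity>" by auto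
  show ?thesis using le Psi_fin[OF fin] fin by (metis ereal_less_eq(3))
qed

lemma psi_conv':
  assumes "\<Psi> a \<noteq> \<infinity>" "\<Psi> (a + q) \<noteq> \<infinity>" "0 \<le> s" "s \<le> 1"
  shows "\<Psi> (a + s *\<^sub>R q) \<noteq> \<infinity> \<and> psi (a + s *\<^sub>R q) \<le> (1 - s) * psi a + s * psi (a + q)"
proof -
  have e: "(1 - s) *\<^sub>R a + s *\<^sub>R (a + q) = a + s *\<^sub>R q" by (simp add: algebra_simps)
  show ?thesis using psi_conv[OF assms(1,2,3,4)] unfolding e .
qed

lemma descentL: "\<bar>f b - f a - g a \<bullet> (b - a)\<bar> \<le> L * (norm (b - a))\<^sup>2"
  using descent[OF f_smooth] L_pos by simp

lemma grad_ineq: "g a \<bullet> (b - a) \<le> f b - f a"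
proof (rule ccontr)
  assume na: "\<not> ?thesis"
  define \<delta> where "\<delta> = g a \<bullet> (b - a) - (f b - f a)"
  define h where "h = b - a"
  have dpos: "\<delta> > 0" using na by (simp add: \<delta>_def)
  define t where "t = min 1 (\<delta> / (2 * (L * (norm h)\<^sup>2 + 1)))"
  have den: "0 < L * (norm h)\<^sup>2 + 1"
    using L_pos by (metis add_nonneg_pos mult_nonneg_nonneg zero_le_power2 less_imp_le zero_less_one)
  have tpos: "t > 0" using dpos den by (simp add: t_def)
  have t1: "t \<le> 1" by (simp add: t_def)
  have cv: "f ((1 - t) *\<^sub>R a + t *\<^sub>R b) \<le> (1 - t) * f a + t * f b"
    using convex_onD[OF f_convex, of t a b] tpos t1 by auto
  have e: "(1 - t) *\<^sub>R a + t *\<^sub>R b = a + t *\<^sub>R h" by (simp add: h_def algebra_simps)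
  have ds: "f (a + t *\<^sub>R h) \<ge> f a + t * (g a \<bullet> h) - L * t\<^sup>2 * (norm h)\<^sup>2"
    using descentL[of "a + t *\<^sub>R h" a] tpos by (simp add: power_mult_distrib abs_le_iff)
  have "t * (g a \<bullet> h) - L * t\<^sup>2 * (norm h)\<^sup>2 \<le> t * (f b - f a)"
    using cv ds unfolding e by (simp add: algebra_simps)
  hence "t * \<delta> \<le> L * t\<^sup>2 * (norm h)\<^sup>2" by (simp add: \<delta>_def h_def algebra_simps)
  hence "\<delta> \<le> L * t * (norm h)\<^sup>2" using tpos by (simp add: power2_eq_square algebra_simps)
  also have "\<dots> \<le> (L * (norm h)\<^sup>2 + 1) * t" using tpos by (simp add: algebra_simps)
  also have "\<dots> \<le> (L * (norm h)\<^sup>2 + 1) * (\<delta> / (2 * (L * (norm h)\<^sup>2 + 1)))"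
    using den by (intro mult_left_mono) (auto simp: t_def)
  also have "\<dots> = \<delta> / 2" using den by (simp add: field_simps)
  finally show False using dpos by simp
qed

end


context isqa begin

lemma Q_fin:
  assumes "\<Psi> a \<noteq> \<infinity>" "\<Psi> (a + q) \<noteq> \<infinity>"
  shows "Qmodel g \<Psi> (H t) a q = ereal (g a \<bullet> q + 1/2 * (q \<bullet> H t q) + psi (a + q) - psi a)"
  unfolding Qmodel_def by (subst Psi_fin[OF assms(1)], subst Psi_fin[OF assms(2)]) simp

lemma Q_inf:
  assumes "\<Psi> a \<noteq> \<infinity>" "\<Psi> (a + q) = \<infinity>"
  shows "Qmodel g \<Psi> (H t) a q = \<infinity>"
  unfolding Qmodel_def by (subst Psi_fin[OF assms(1)]) (simp add: assms(2))

lemma Q_zero: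
  assumes "\<Psi> a \<noteq> \<infinity>"
  shows "Qmodel g \<Psi> (H t) a 0 = 0"
  using Q_fin[of a 0 t] assms by (simp add: zero_ereal_def)

definition s0 where "s0 = min 1 (m / (2 * L))"

lemma s0: "0 < s0" "s0 \<le> 1" "L * s0 \<le> m / 2"
  using mM L_pos by (auto simp: s0_def min_def field_simps)

lemma H_lower: "m * (norm v)\<^sup>2 \<le> v \<bullet> H t v" using H_bounds by blast
lemma H_upper: "v \<bullet> H t v \<le> M * (norm v)\<^sup>2" using H_bounds by blast
lemma H_scale: "H t (c *\<^sub>R v) = c *\<^sub>R H t v" using linear_cmul[OF H_lin] by blast

lemma Q_low:
  assumes a: "\<Psi> a \<noteq> \<infinity>"
  shows "ereal (- (Fr a - Fs) / s0) \<le> Qmodel g \<Psi> (H t) a q"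
proof (cases "\<Psi> (a + q) = \<infinity>")
  case True thus ?thesis using Q_inf[OF a True] by simp
next
  case False
  note fin = False
  have cv: "\<Psi> (a + s0 *\<^sub>R q) \<noteq> \<infinity>" "psi (a + s0 *\<^sub>R q) \<le> (1 - s0) * psi a + s0 * psi (a + q)"
    using psi_conv'[OF a fin, of s0] s0 by auto
  have fs: "Fs \<le> f (a + s0 *\<^sub>R q) + psi (a + s0 *\<^sub>R q)" using Fs_le[OF cv(1)] .
  have ds: "f (a + s0 *\<^sub>R q) \<le> f a + s0 * (g a \<bullet> q) + L * s0\<^sup>2 * (norm q)\<^sup>2"
    using descentL[of "a + s0 *\<^sub>R q" a] s0 by (simp add: power_mult_distrib abs_le_iff)
  have hq: "m * (norm q)\<^sup>2 \<le> q \<bullet> H t q" by (rule H_lower)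
  have "L * s0\<^sup>2 * (norm q)\<^sup>2 = s0 * ((L * s0) * (norm q)\<^sup>2)" by (simp add: power2_eq_square)
  also have "\<dots> \<le> s0 * ((m/2) * (norm q)\<^sup>2)"
    using s0 by (intro mult_left_mono mult_right_mono) auto
  also have "\<dots> \<le> s0 * (1/2 * (q \<bullet> H t q))" using s0 hq by (intro mult_left_mono) auto
  finally have key: "L * s0\<^sup>2 * (norm q)\<^sup>2 \<le> s0 * (1/2 * (q \<bullet> H t q))" .
  have "- (Fr a - Fs) \<le> s0 * (g a \<bullet> q + 1/2 * (q \<bullet> H t q) + psi (a + q) - psi a)"
    using fs ds cv(2) key by (simp add: algebra_simps)
  hence "- (Fr a - Fs) / s0 \<le> g a \<bullet> q + 1/2 * (q \<bullet> H t q) + psi (a + q) - psi a"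
    using s0 by (simp add: divide_le_eq mult.commute)
  thus ?thesis using Q_fin[OF a fin] by simp
qed

lemma Qstar_fin:
  assumes a: "\<Psi> a \<noteq> \<infinity>"
  shows "Qstar g \<Psi> (H t) a = ereal (real_of_ereal (Qstar g \<Psi> (H t) a))"
    and "real_of_ereal (Qstar g \<Psi> (H t) a) \<le> 0"
    and "- (Fr a - Fs) / s0 \<le> real_of_ereal (Qstar g \<Psi> (H t) a)"
proof -
  have up: "Qstar g \<Psi> (H t) a \<le> 0"
    unfolding Qstar_def using Q_zero[OF a, of t] by (metis INF_lower UNIV_I)
  have lo: "ereal (- (Fr a - Fs) / s0) \<le> Qstar g \<Psi> (H t) a"
    unfolding Qstar_def using Q_low[OF a] by (intro INF_greatest) auto
  show e: "Qstar g \<Psi> (H t) a = ereal (real_of_ereal (Qstar g \<Psi> (H t) a))"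
    using up lo by (cases "Qstar g \<Psi> (H t) a") auto
  show "real_of_ereal (Qstar g \<Psi> (H t) a) \<le> 0" using up e
    by (metis ereal_less_eq(3) zero_ereal_def)
  show "- (Fr a - Fs) / s0 \<le> real_of_ereal (Qstar g \<Psi> (H t) a)" using lo e
    by (metis ereal_less_eq(3))
qed

lemma Qstar_le:
  assumes a: "\<Psi> a \<noteq> \<infinity>" and fin: "\<Psi> (a + q) \<noteq> \<infinity>"
  shows "real_of_ereal (Qstar g \<Psi> (H t) a) \<le> g a \<bullet> q + 1/2 * (q \<bullet> H t q) + psi (a + q) - psi a"
proof -
  have "Qstar g \<Psi> (H t) a \<le> Qmodel g \<Psi> (H t) a q" unfolding Qstar_def by (rule INF_lower) simp
  thus ?thesis using Qstar_fin(1)[OF a, of t] Q_fin[OF a fin, of t] by (metis ereal_less_eq(3))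
qed

end


context isqa begin

abbreviation qs where "qs t \<equiv> real_of_ereal (Qstar g \<Psi> (H t) (x t))"
abbreviation qp where "qp t \<equiv> real_of_ereal (Qmodel g \<Psi> (H t) (x t) (p t))"

lemma inex:
  assumes a: "\<Psi> (x t) \<noteq> \<infinity>"
  shows "\<Psi> (x t + p t) \<noteq> \<infinity>" "Qmodel g \<Psi> (H t) (x t) (p t) = ereal (qp t)"
    "qs t \<le> qp t" "qp t \<le> (1 - \<eta>) * qs t"
proof -
  obtain c where e: "Qstar g \<Psi> (H t) (x t) = ereal c" using Qstar_fin(1)[OF a] by blast
  have ce: "qs t = c" unfolding e by simp
  have lo: "Qstar g \<Psi> (H t) (x t) \<le> Qmodel g \<Psi> (H t) (x t) (p t)" unfolding Qstar_def by (rule INF_lower) simp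
  have ie: "Qmodel g \<Psi> (H t) (x t) (p t) - ereal c \<le> ereal (- \<eta> * c)"
    using inexact[of t] unfolding e by simp
  obtain r where r: "Qmodel g \<Psi> (H t) (x t) (p t) = ereal r"
    using lo ie unfolding e by (cases "Qmodel g \<Psi> (H t) (x t) (p t)") auto
  have re: "qp t = r" unfolding r by simp
  show fm: "Qmodel g \<Psi> (H t) (x t) (p t) = ereal (qp t)" unfolding re by (rule r)
  show "\<Psi> (x t + p t) \<noteq> \<infinity>" using Q_inf[OF a, of "p t" t] r by auto
  show "qs t \<le> qp t" using lo unfolding e r ce re by simp
  show "qp t \<le> (1 - \<eta>) * qs t" using ie unfolding r ce re by (simp add: algebra_simps)
qed

lemma qp_formula:
  assumes a: "\<Psi> (x t) \<noteq> \<infinity>"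
  shows "qp t = g (x t) \<bullet> p t + 1/2 * (p t \<bullet> H t (p t)) + psi (x t + p t) - psi (x t)"
  using inex(2)[OF a] Q_fin[OF a inex(1)[OF a], of t] by simp

lemma qp_nonpos:
  assumes a: "\<Psi> (x t) \<noteq> \<infinity>"
  shows "qp t \<le> 0"
proof -
  have "(1 - \<eta>) * qs t \<le> 0" using Qstar_fin(2)[OF a] \<eta> by (simp add: mult_nonneg_nonpos)
  thus ?thesis using inex(4)[OF a] by linarith
qed

lemma p_bound:
  assumes a: "\<Psi> (x t) \<noteq> \<infinity>"
  shows "(norm (p t))\<^sup>2 \<le> 8 / (m * (1 - \<eta>)) * (- qp t)"
proof -
  note fp = inex(1)[OF a]
  have cv: "\<Psi> (x t + (1/2) *\<^sub>R p t) \<noteq> \<infinity>"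
     "psi (x t + (1/2) *\<^sub>R p t) \<le> 1/2 * psi (x t) + 1/2 * psi (x t + p t)"
    using psi_conv'[OF a fp, of "1/2"] by auto
  have "qs t \<le> g (x t) \<bullet> ((1/2) *\<^sub>R p t) + 1/2 * (((1/2) *\<^sub>R p t) \<bullet> H t ((1/2) *\<^sub>R p t))
          + psi (x t + (1/2) *\<^sub>R p t) - psi (x t)"
    using Qstar_le[OF a cv(1)] .
  also have "\<dots> = 1/2 * (g (x t) \<bullet> p t) + 1/8 * (p t \<bullet> H t (p t)) + psi (x t + (1/2) *\<^sub>R p t) - psi (x t)"
    by (simp add: H_scale)
  finally have m1: "qs t \<le> qp t / 2 - 1/8 * (p t \<bullet> H t (p t))"
    using cv(2) qp_formula[OF a] by linarith
  have hl: "m * (norm (p t))\<^sup>2 \<le> p t \<bullet> H t (p t)" by (rule H_lower)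
  have e1: "1 - \<eta> > 0" using \<eta> by simp
  have "qp t / (1 - \<eta>) \<le> qs t" using inex(4)[OF a] e1 by (simp add: divide_le_eq mult.commute)
  hence "m / 8 * (norm (p t))\<^sup>2 \<le> qp t / 2 - qp t / (1 - \<eta>)" using m1 hl by simp
  also have "\<dots> \<le> - qp t / (1 - \<eta>)" using qp_nonpos[OF a] by simp
  finally have "m / 8 * (norm (p t))\<^sup>2 \<le> - qp t / (1 - \<eta>)" .
  hence "(m / 8 * (norm (p t))\<^sup>2) * (8 * (1 - \<eta>)) \<le> (- qp t / (1 - \<eta>)) * (8 * (1 - \<eta>))"
    using e1 by (intro mult_right_mono) auto
  also have "\<dots> = 8 * (- qp t)" using e1 by (simp add: field_simps)
  also have "(m / 8 * (norm (p t))\<^sup>2) * (8 * (1 - \<eta>)) = (norm (p t))\<^sup>2 * (m * (1 - \<eta>))" by simp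
  finally have fin: "(norm (p t))\<^sup>2 * (m * (1 - \<eta>)) \<le> 8 * (- qp t)" .
  have D: "m * (1 - \<eta>) > 0" using e1 mM by simp
  have "(norm (p t))\<^sup>2 \<le> (8 * (- qp t)) / (m * (1 - \<eta>))" by (subst pos_le_divide_eq[OF D]) (rule fin)
  thus ?thesis by (metis times_divide_eq_left)
qed

end


context isqa begin

lemma linesearch:
  assumes a: "\<Psi> (x t) \<noteq> \<infinity>" and a0: "0 < a0" "a0 \<le> s0"
  shows "\<Psi> (x t + a0 *\<^sub>R p t) \<noteq> \<infinity>" "Fr (x t + a0 *\<^sub>R p t) \<le> Fr (x t) + a0 * qp t"
proof -
  note fp = inex(1)[OF a]
  have cv: "\<Psi> (x t + a0 *\<^sub>R p t) \<noteq> \<infinity>" "psi (x t + a0 *\<^sub>R p t) \<le> (1 - a0) * psi (x t) + a0 * psi (x t + p t)"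
    using psi_conv'[OF a fp, of a0] a0 s0 by auto
  thus "\<Psi> (x t + a0 *\<^sub>R p t) \<noteq> \<infinity>" by simp
  have ds: "f (x t + a0 *\<^sub>R p t) \<le> f (x t) + a0 * (g (x t) \<bullet> p t) + L * a0\<^sup>2 * (norm (p t))\<^sup>2"
    using descentL[of "x t + a0 *\<^sub>R p t" "x t"] a0 by (simp add: power_mult_distrib abs_le_iff)
  have hl: "m * (norm (p t))\<^sup>2 \<le> p t \<bullet> H t (p t)" by (rule H_lower)
  have "L * a0 \<le> L * s0" using a0 L_pos by (intro mult_left_mono) auto
  hence "L * a0 \<le> m / 2" using s0(3) by linarith
  hence "L * a0\<^sup>2 * (norm (p t))\<^sup>2 = a0 * ((L * a0) * (norm (p t))\<^sup>2)" by (simp add: power2_eq_square)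
  also have "\<dots> \<le> a0 * ((m/2) * (norm (p t))\<^sup>2)"
    using \<open>L * a0 \<le> m / 2\<close> a0 by (intro mult_left_mono mult_right_mono) auto
  also have "\<dots> \<le> a0 * (1/2 * (p t \<bullet> H t (p t)))" using a0 hl by (intro mult_left_mono) auto
  finally have key: "L * a0\<^sup>2 * (norm (p t))\<^sup>2 \<le> a0 * (1/2 * (p t \<bullet> H t (p t)))" .
  have e: "a0 * qp t = a0 * (g (x t) \<bullet> p t) + a0 * (1/2 * (p t \<bullet> H t (p t))) + a0 * psi (x t + p t) - a0 * psi (x t)"
    unfolding qp_formula[OF a] by (simp add: algebra_simps)
  have cv2: "psi (x t + a0 *\<^sub>R p t) \<le> psi (x t) - a0 * psi (x t) + a0 * psi (x t + p t)"
    using cv(2) by (simp add: algebra_simps)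
  show "Fr (x t + a0 *\<^sub>R p t) \<le> Fr (x t) + a0 * qp t"
    using ds cv2 key e by linarith
qed

definition k0 where "k0 = (LEAST k. \<beta> ^ k \<le> s0)"
definition abar where "abar = \<beta> ^ k0"

lemma abar: "0 < abar" "abar \<le> s0"
proof -
  obtain n where "\<beta> ^ n < s0" using real_arch_pow_inv[OF s0(1) \<beta>(2)] by auto
  hence "\<beta> ^ n \<le> s0" by simp
  thus "abar \<le> s0" unfolding abar_def k0_def by (rule LeastI)
  show "0 < abar" unfolding abar_def using \<beta> by simp
qed

lemma alpha_step:
  assumes a: "\<Psi> (x t) \<noteq> \<infinity>"
  shows "abar \<le> \<alpha> t" "\<alpha> t \<le> 1" "\<Psi> (x (Suc t)) \<noteq> \<infinity>"
    "Fr (x (Suc t)) \<le> Fr (x t) + \<gamma> * \<alpha> t * qp t"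
proof -
  obtain r where r: "Qmodel g \<Psi> (H t) (x t) (p t) = ereal r" using inex(2)[OF a] by blast
  have rq: "qp t = r" unfolding r by simp
  have rneg: "r \<le> 0" using qp_nonpos[OF a] rq by simp
  define C where "C = (\<lambda>k. Fobj f \<Psi> (x t + (\<beta> ^ k) *\<^sub>R p t)
                        \<le> Fobj f \<Psi> (x t) + ereal (\<gamma> * \<beta> ^ k) * Qmodel g \<Psi> (H t) (x t) (p t))"
  have Cform: "C k \<longleftrightarrow> Fobj f \<Psi> (x t + (\<beta> ^ k) *\<^sub>R p t) \<le> ereal (Fr (x t) + \<gamma> * \<beta> ^ k * r)" for k
    unfolding C_def r Fobj_fin[OF a] by simp
  have ck0: "C k0"
  proof -
    have b0: "0 < \<beta> ^ k0" "\<beta> ^ k0 \<le> s0" using abar by (auto simp: abar_def)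
    note ls = linesearch[OF a b0]
    have "\<beta> ^ k0 * r \<le> \<gamma> * \<beta> ^ k0 * r"
    proof -
      have "(1 - \<gamma>) * (\<beta> ^ k0 * (- r)) \<ge> 0" using \<gamma> b0 rneg by (intro mult_nonneg_nonneg) auto
      thus ?thesis by (simp add: algebra_simps)
    qed
    hence "Fr (x t + \<beta> ^ k0 *\<^sub>R p t) \<le> Fr (x t) + \<gamma> * \<beta> ^ k0 * r" using ls(2)[unfolded rq] by linarith
    thus ?thesis unfolding Cform Fobj_fin[OF ls(1)] by simp
  qed
  define kk where "kk = (LEAST k. C k)"
  have ckk: "C kk" unfolding kk_def using ck0 by (rule LeastI)
  have kle: "kk \<le> k0" unfolding kk_def using ck0 by (rule Least_le)
  have al: "\<alpha> t = \<beta> ^ kk" using \<alpha>_def[of t] unfolding kk_def C_def by simp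
  show "abar \<le> \<alpha> t" unfolding al abar_def using kle \<beta> by (intro power_decreasing) auto
  show "\<alpha> t \<le> 1" unfolding al using \<beta> by (simp add: power_le_one)
  have xs: "x (Suc t) = x t + (\<beta> ^ kk) *\<^sub>R p t" using x_step[of t] al by simp
  have le: "Fobj f \<Psi> (x (Suc t)) \<le> ereal (Fr (x t) + \<gamma> * \<beta> ^ kk * r)" using ckk unfolding Cform xs .
  show fin: "\<Psi> (x (Suc t)) \<noteq> \<infinity>" using le Fobj_inf[of "x (Suc t)"] by auto
  have "Fr (x (Suc t)) \<le> Fr (x t) + \<gamma> * \<beta> ^ kk * r" using le unfolding Fobj_fin[OF fin] by simp
  thus "Fr (x (Suc t)) \<le> Fr (x t) + \<gamma> * \<alpha> t * qp t" unfolding al rq .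
qed

lemma all_fin: "\<Psi> (x t) \<noteq> \<infinity>"
  by (induction t) (use x0_dom alpha_step(3) in auto)

end


context isqa begin

lemma Omega_convex: "convex \<Omega>"
proof (rule convexI)
  fix y1 y2 and u v :: real
  assume y: "y1 \<in> \<Omega>" "y2 \<in> \<Omega>" and uv: "0 \<le> u" "0 \<le> v" "u + v = 1"
  have u: "u = 1 - v" using uv by simp
  have f1: "\<Psi> y1 \<noteq> \<infinity>" "Fr y1 = Fs" "\<Psi> y2 \<noteq> \<infinity>" "Fr y2 = Fs" using y Omega_char by auto
  have v1: "v \<le> 1" using uv by simp
  note pc = psi_conv[OF f1(1) f1(3) uv(2) v1]
  have fc: "f ((1 - v) *\<^sub>R y1 + v *\<^sub>R y2) \<le> (1 - v) * f y1 + v * f y2"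
    using convex_onD[OF f_convex, of v y1 y2] uv v1 by auto
  have "Fr ((1 - v) *\<^sub>R y1 + v *\<^sub>R y2) \<le> (1 - v) * Fr y1 + v * Fr y2"
    using pc fc by (simp add: algebra_simps)
  also have "\<dots> = Fs" using f1 by (simp add: algebra_simps)
  finally have "Fr ((1 - v) *\<^sub>R y1 + v *\<^sub>R y2) = Fs" using Fs_le[OF conjunct1[OF pc]] by linarith
  thus "u *\<^sub>R y1 + v *\<^sub>R y2 \<in> \<Omega>" using pc Omega_char u by auto
qed

lemma f_cont: "isCont f y"
proof -
  have "(f has_derivative (\<lambda>v. g y \<bullet> v)) (at y)" using f_smooth unfolding L_smooth_def by blast
  thus ?thesis by (rule has_derivative_continuous)
qed

lemma Fobj_minus: "\<Psi> y \<noteq> \<infinity> \<Longrightarrow> Fobj f \<Psi> y - Fstar = ereal (Fr y - Fs)"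
proof -
  assume a: "\<Psi> y \<noteq> \<infinity>"
  have "Fobj f \<Psi> y - Fstar = ereal (Fr y) - ereal Fs" using Fobj_fin[OF a] Fstar_fin by metis
  thus ?thesis by simp
qed

lemma Omega_closed: "closed \<Omega>"
  unfolding closed_sequential_limits
proof (intro allI impI, elim conjE)
  fix ys y assume ys: "\<forall>n. ys n \<in> \<Omega>" and lim: "ys \<longlonglongrightarrow> y"
  have fc: "(\<lambda>n. f (ys n)) \<longlonglongrightarrow> f y" using isCont_tendsto_compose[OF f_cont lim] .
  have bnd: "\<Psi> y \<le> ereal (Fs - f y + e)" if e: "e > 0" for e
  proof -
    have cl: "closed {z. \<Psi> z \<le> ereal (Fs - f y + e)}" using \<Psi>_lsc unfolding ext_lsc_def by blast
    have ev: "eventually (\<lambda>n. f y - e < f (ys n)) sequentially"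
      using order_tendstoD(1)[OF fc, of "f y - e"] e by simp
    have "eventually (\<lambda>n. ys n \<in> {z. \<Psi> z \<le> ereal (Fs - f y + e)}) sequentially"
    proof (rule eventually_mono[OF ev])
      fix n assume n: "f y - e < f (ys n)"
      have o: "\<Psi> (ys n) \<noteq> \<infinity>" "Fr (ys n) = Fs" using ys Omega_char by auto
      have "psi (ys n) \<le> Fs - f y + e" using o(2) n by linarith
      thus "ys n \<in> {z. \<Psi> z \<le> ereal (Fs - f y + e)}" using Psi_fin[OF o(1)] by (metis ereal_less_eq(3) mem_Collect_eq)
    qed
    from Lim_in_closed_set[OF cl this trivial_limit_sequentially lim] show ?thesis by simp
  qed
  have fin: "\<Psi> y \<noteq> \<infinity>" using bnd[of 1] by auto
  have "psi y \<le> Fs - f y" 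
  proof (rule field_le_epsilon)
    fix e :: real assume "0 < e"
    thus "psi y \<le> Fs - f y + e" using bnd[of e] Psi_fin[OF fin] by (metis ereal_less_eq(3))
  qed
  hence "Fr y = Fs" using Fs_le[OF fin] by linarith
  thus "y \<in> \<Omega>" using fin Omega_char by auto
qed

lemma cp: "closest_point \<Omega> y \<in> \<Omega>" "infdist y \<Omega> = norm (y - closest_point \<Omega> y)"
  using closest_point_in_set[OF Omega_closed \<Omega>_ne] setdist_closest_point[OF Omega_closed \<Omega>_ne]
  by (auto simp: infdist_eq_setdist dist_norm)

lemma Qstar_upper:
  assumes a: "\<Psi> y \<noteq> \<infinity>" and s: "0 \<le> s" "s \<le> 1"
  shows "real_of_ereal (Qstar g \<Psi> (H t) y) \<le> - s * (Fr y - Fs) + s\<^sup>2 * M * (infdist y \<Omega>)\<^sup>2 / 2"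
proof -
  define w where "w = closest_point \<Omega> y"
  define h where "h = w - y"
  have w: "\<Psi> w \<noteq> \<infinity>" "Fr w = Fs" using cp(1)[of y] Omega_char unfolding w_def by auto
  have yh: "y + h = w" by (simp add: h_def)
  have d: "infdist y \<Omega> = norm h" using cp(2)[of y] by (simp add: h_def w_def norm_minus_commute)
  have wf: "\<Psi> (y + h) \<noteq> \<infinity>" using w yh by simp
  note pc = psi_conv'[OF a wf s]
  have q: "real_of_ereal (Qstar g \<Psi> (H t) y) \<le> g y \<bullet> (s *\<^sub>R h) + 1/2 * ((s *\<^sub>R h) \<bullet> H t (s *\<^sub>R h)) + psi (y + s *\<^sub>R h) - psi y"
    using Qstar_le[OF a conjunct1[OF pc]] .
  have e1: "g y \<bullet> (s *\<^sub>R h) = s * (g y \<bullet> h)" by simp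
  have e2: "(s *\<^sub>R h) \<bullet> H t (s *\<^sub>R h) = s\<^sup>2 * (h \<bullet> H t h)" by (simp add: H_scale power2_eq_square)
  have P1: "s * (g y \<bullet> h) \<le> s * (f w - f y)" using grad_ineq[of y w] s by (intro mult_left_mono) (auto simp: h_def)
  have P2: "s\<^sup>2 * (h \<bullet> H t h) \<le> s\<^sup>2 * (M * (norm h)\<^sup>2)" using H_upper by (intro mult_left_mono) auto
  have P3: "psi (y + s *\<^sub>R h) \<le> psi y - s * psi y + s * psi w"
    using conjunct2[OF pc] yh by (simp add: algebra_simps)
  have eq: "- s * (Fr y - Fs) + s\<^sup>2 * M * (infdist y \<Omega>)\<^sup>2 / 2
      = s * (f w - f y) + 1/2 * (s\<^sup>2 * (M * (norm h)\<^sup>2)) + (psi y - s * psi y + s * psi w) - psi y"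
    unfolding d using w(2)[symmetric] by (simp add: algebra_simps)
  show ?thesis using q P1 P2 P3 unfolding eq e1 e2 by linarith
qed

lemma norm_sq_expand:
  fixes u b :: "'b::real_inner"
  shows "(norm (l *\<^sub>R u - b))\<^sup>2 = l\<^sup>2 * (norm u)\<^sup>2 - 2 * l * (u \<bullet> b) + (norm b)\<^sup>2"
  unfolding power2_norm_eq_inner by (simp add: inner_diff_left inner_diff_right inner_commute power2_eq_square algebra_simps)

lemma err_global:
  assumes a: "\<Psi> y \<noteq> \<infinity>" and big: "Fr y - Fs > \<xi>"
  shows "infdist y \<Omega> \<le> \<xi> powr \<theta> / (\<zeta> * \<xi>) * (Fr y - Fs)"
proof -
  define D where "D = Fr y - Fs"
  have Dpos: "D > 0" using big \<xi>\<zeta> by (simp add: D_def)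
  define l where "l = \<xi> / D"
  have l: "0 < l" "l \<le> 1" using Dpos big \<xi>\<zeta> by (auto simp: l_def D_def)
  define w where "w = closest_point \<Omega> y"
  have w: "\<Psi> w \<noteq> \<infinity>" "Fr w = Fs" using cp(1)[of y] Omega_char unfolding w_def by auto
  have d: "infdist y \<Omega> = norm (y - w)" using cp(2)[of y] by (simp add: w_def)
  define z where "z = (1 - l) *\<^sub>R w + l *\<^sub>R y"
  note pc = psi_conv[OF w(1) a, of l, folded z_def]
  have fc: "f z \<le> (1 - l) * f w + l * f y"
    using convex_onD[OF f_convex, of l w y] l unfolding z_def by auto
  have zf: "\<Psi> z \<noteq> \<infinity>" using pc l by auto
  have "Fr z \<le> (1 - l) * Fr w + l * Fr y" using pc fc l by (simp add: algebra_simps)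
  hence "Fr z - Fs \<le> l * D" using w(2) by (simp add: D_def algebra_simps)
  also have "l * D = \<xi>" using Dpos by (simp add: l_def)
  finally have zx: "Fr z - Fs \<le> \<xi>" .
  have z0: "0 \<le> Fr z - Fs" using Fs_le[OF zf] by simp
  have fo: "Fobj f \<Psi> z - Fstar = ereal (Fr z - Fs)" using Fobj_minus[OF zf] .
  have "\<zeta> * infdist z \<Omega> \<le> (Fr z - Fs) powr \<theta>"
    using error_bound[of z] zx unfolding fo by simp
  also have "\<dots> \<le> \<xi> powr \<theta>" using powr_mono2[of \<theta> "Fr z - Fs" \<xi>] \<theta> z0 zx by simp
  finally have eb: "\<zeta> * infdist z \<Omega> \<le> \<xi> powr \<theta>" .
  define v where "v = closest_point \<Omega> z"
  have vO: "v \<in> \<Omega>" using cp(1) unfolding v_def .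
  have idz: "infdist z \<Omega> = norm (z - v)" using cp(2)[of z] unfolding v_def .
  have dot: "(y - w) \<bullet> (v - w) \<le> 0"
    using closest_point_dot[OF Omega_convex Omega_closed vO, of y] unfolding w_def by simp
  have zv: "z - v = l *\<^sub>R (y - w) - (v - w)" by (simp add: z_def algebra_simps)
  have "(norm (z - v))\<^sup>2 = l\<^sup>2 * (norm (y - w))\<^sup>2 - 2 * l * ((y - w) \<bullet> (v - w)) + (norm (v - w))\<^sup>2"
    unfolding zv by (rule norm_sq_expand)
  also have "\<dots> \<ge> (l * norm (y - w))\<^sup>2"
  proof -
    have "- 2 * l * ((y - w) \<bullet> (v - w)) \<ge> 0" using l dot by (simp add: mult_nonneg_nonpos)
    moreover have "(l * norm (y - w))\<^sup>2 = l\<^sup>2 * (norm (y - w))\<^sup>2" by (simp add: power_mult_distrib)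
    moreover have "(norm (v - w))\<^sup>2 \<ge> 0" by simp
    ultimately show ?thesis by linarith
  qed
  finally have "l * norm (y - w) \<le> norm (z - v)" by (rule power2_le_imp_le) simp
  hence "\<zeta> * (l * infdist y \<Omega>) \<le> \<xi> powr \<theta>"
    using eb idz d \<xi>\<zeta> by (smt (verit) mult_left_mono)
  hence "infdist y \<Omega> * (\<zeta> * l) \<le> \<xi> powr \<theta>" by (simp add: algebra_simps)
  hence "infdist y \<Omega> \<le> \<xi> powr \<theta> / (\<zeta> * l)" using l \<xi>\<zeta> by (simp add: pos_le_divide_eq)
  also have "\<xi> powr \<theta> / (\<zeta> * l) = \<xi> powr \<theta> / (\<zeta> * \<xi>) * D" using Dpos \<xi>\<zeta> by (simp add: l_def field_simps)
  finally show ?thesis by (simp add: D_def)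
qed

lemma err_local:
  assumes a: "\<Psi> y \<noteq> \<infinity>" and small: "Fr y - Fs \<le> \<xi>"
  shows "(infdist y \<Omega>) ^ 4 \<le> \<xi> powr (4 * \<theta> - 1) / \<zeta> ^ 4 * (Fr y - Fs)"
proof -
  define D where "D = Fr y - Fs"
  have D0: "0 \<le> D" using Fs_le[OF a] by (simp add: D_def)
  have fo: "Fobj f \<Psi> y - Fstar = ereal D" using Fobj_minus[OF a] by (simp add: D_def)
  have eb: "\<zeta> * infdist y \<Omega> \<le> D powr \<theta>" using error_bound[of y] small unfolding fo by (simp add: D_def)
  show ?thesis
  proof (cases "D = 0")
    case True
    hence "infdist y \<Omega> = 0" using eb \<xi>\<zeta> infdist_nonneg[of y \<Omega>] by (simp add: mult_le_0_iff)
    thus ?thesis using True by (simp add: D_def)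
  next
    case False
    hence Dp: "D > 0" using D0 by simp
    have "(\<zeta> * infdist y \<Omega>) ^ 4 \<le> (D powr \<theta>) ^ 4"
      using eb \<xi>\<zeta> infdist_nonneg[of y \<Omega>] by (intro power_mono) auto
    also have "(D powr \<theta>) ^ 4 = D powr (4 * \<theta>)" using powr_power[of D \<theta> 4] Dp by simp
    also have "\<dots> = D * D powr (4 * \<theta> - 1)" using powr_mult_base[of D "4 * \<theta> - 1"] D0 by simp
    also have "\<dots> \<le> D * \<xi> powr (4 * \<theta> - 1)"
      using powr_mono2[of "4 * \<theta> - 1" D \<xi>] \<theta> D0 small by (intro mult_left_mono) (auto simp: D_def)
    finally have "infdist y \<Omega> ^ 4 * \<zeta> ^ 4 \<le> \<xi> powr (4 * \<theta> - 1) * D" by (simp add: power_mult_distrib algebra_simps)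
    hence "infdist y \<Omega> ^ 4 \<le> \<xi> powr (4 * \<theta> - 1) * D / \<zeta> ^ 4" using \<xi>\<zeta> by (simp add: pos_le_divide_eq)
    thus ?thesis by (simp add: D_def)
  qed
qed

end



lemma lin_descent_false:
  fixes a :: "nat \<Rightarrow> real"
  assumes dec: "\<And>t. a (Suc t) \<le> a t - \<delta>" and d: "\<delta> > 0" and nn: "\<And>t. a t \<ge> 0"
  shows False
proof -
  have le: "a n \<le> a 0 - real n * \<delta>" for n
  proof (induction n)
    case (Suc n) thus ?case using dec[of n] by (simp add: algebra_simps)
  qed simp
  obtain n where "a 0 < real n * \<delta>" using ex_less_of_nat_mult[OF d] by blast
  thus False using le[of n] nn[of n] by linarith
qed

lemma tele_bound:
  fixes u v S K c :: real
  assumes v0: "0 \<le> v" and vu: "v \<le> u" and S0: "0 \<le> S" and K0: "0 \<le> K" and c0: "0 < c"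
    and SK: "S\<^sup>2 \<le> K * (u ^ 4 - v ^ 4)" and dc: "c * u ^ 6 \<le> u ^ 4 - v ^ 4"
  shows "S \<le> 4 * sqrt (K / c) * (u - v)"
proof (cases "u = 0")
  case True
  hence "v = 0" using v0 vu by simp
  hence "S\<^sup>2 \<le> 0" using SK True by simp
  hence "S = 0" by simp
  thus ?thesis using True \<open>v = 0\<close> by simp
next
  case False
  hence u0: "u > 0" using v0 vu by simp
  have id: "u ^ 4 - v ^ 4 = (u - v) * (u^3 + u^2 * v + u * v^2 + v^3)" by (simp add: algebra_simps power2_eq_square power3_eq_cube power4_eq_xxxx)
  have "u^2 * v \<le> u^3" "u * v^2 \<le> u^3" "v^3 \<le> u^3"
    using v0 vu u0 by (auto simp: power2_eq_square power3_eq_cube intro!: mult_left_mono mult_mono)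
  hence "u^3 + u^2 * v + u * v^2 + v^3 \<le> 4 * u^3" by linarith
  hence A: "u ^ 4 - v ^ 4 \<le> (u - v) * (4 * u^3)" unfolding id using vu by (intro mult_left_mono) auto
  have B0: "0 \<le> u ^ 4 - v ^ 4" using dc c0 u0 by (smt (verit) mult_pos_pos zero_less_power)
  have "c * u ^ 6 * (u ^ 4 - v ^ 4) \<le> (u ^ 4 - v ^ 4) * (u ^ 4 - v ^ 4)"
    using dc B0 by (intro mult_right_mono) auto
  also have "\<dots> \<le> ((u - v) * (4 * u^3)) * ((u - v) * (4 * u^3))"
    using A B0 by (intro mult_mono) auto
  also have "\<dots> = u ^ 6 * (16 * (u - v)\<^sup>2)" by (simp add: algebra_simps power2_eq_square power3_eq_cube eval_nat_numeral)
  finally have "u ^ 6 * (c * (u ^ 4 - v ^ 4)) \<le> u ^ 6 * (16 * (u - v)\<^sup>2)" by (simp add: algebra_simps)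
  hence C: "c * (u ^ 4 - v ^ 4) \<le> 16 * (u - v)\<^sup>2" using u0 by (simp add: mult_le_cancel_left_pos)
  have "S\<^sup>2 \<le> K * (u ^ 4 - v ^ 4)" by (rule SK)
  also have "\<dots> = (K / c) * (c * (u ^ 4 - v ^ 4))" using c0 by simp
  also have "\<dots> \<le> (K / c) * (16 * (u - v)\<^sup>2)" using C K0 c0 by (intro mult_left_mono) auto
  also have "\<dots> = (4 * sqrt (K / c) * (u - v))\<^sup>2" using K0 c0 by (simp add: power_mult_distrib)
  finally show ?thesis by (rule power2_le_imp_le) (use K0 c0 vu in simp)
qed



context isqa begin

abbreviation Dl where "Dl t \<equiv> Fr (x t) - Fs"

definition c1 where "c1 = \<gamma> * abar * (1 - \<eta>)"
definition K2 where "K2 = 8 / (m * (1 - \<eta>)) / (\<gamma> * abar)"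

lemma c1_pos: "c1 > 0" using \<gamma> abar \<eta> by (simp add: c1_def)
lemma K2_pos: "K2 > 0" using \<gamma> abar \<eta> mM by (simp add: K2_def)

lemma D_nonneg: "0 \<le> Dl t" using Fs_le[OF all_fin] by simp

lemma D_dec_qp: "Dl (Suc t) \<le> Dl t - \<gamma> * abar * (- qp t)"
proof -
  note a = all_fin[of t]
  have "\<gamma> * abar \<le> \<gamma> * \<alpha> t" using alpha_step(1)[OF a] \<gamma> by (intro mult_left_mono) auto
  hence "\<gamma> * \<alpha> t * qp t \<le> \<gamma> * abar * qp t" using qp_nonpos[OF a] by (rule mult_right_mono_neg)
  thus ?thesis using alpha_step(4)[OF a] by linarith
qed

lemma D_dec_qs: "Dl (Suc t) \<le> Dl t - c1 * (- qs t)"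
proof -
  note a = all_fin[of t]
  have "(1 - \<eta>) * (- qs t) \<le> - qp t" using inex(4)[OF a] by linarith
  hence "\<gamma> * abar * ((1 - \<eta>) * (- qs t)) \<le> \<gamma> * abar * (- qp t)"
    using \<gamma> abar by (intro mult_left_mono) auto
  thus ?thesis using D_dec_qp[of t] unfolding c1_def by (simp add: mult.assoc)
qed

lemma D_mono: "Dl (Suc t) \<le> Dl t"
  using D_dec_qs[of t] c1_pos Qstar_fin(2)[OF all_fin, of t t] by (smt (verit) mult_pos_pos mult_nonneg_nonneg)

lemma step_sq: "(norm (x (Suc t) - x t))\<^sup>2 \<le> K2 * (Dl t - Dl (Suc t))"
proof -
  note a = all_fin[of t]
  have "norm (x (Suc t) - x t) = \<alpha> t * norm (p t)" using x_step[of t] alpha_step(1)[OF a] abar by simp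
  also have "\<dots> \<le> norm (p t)" using alpha_step(1,2)[OF a] abar by (intro mult_left_le_one_le) auto
  finally have s: "norm (x (Suc t) - x t) \<le> norm (p t)" .
  have "(norm (x (Suc t) - x t))\<^sup>2 \<le> (norm (p t))\<^sup>2" using s by (intro power_mono) auto
  also have "\<dots> \<le> 8 / (m * (1 - \<eta>)) * (- qp t)" by (rule p_bound[OF a])
  also have "- qp t \<le> (Dl t - Dl (Suc t)) / (\<gamma> * abar)"
    using D_dec_qp[of t] \<gamma> abar by (simp add: pos_le_divide_eq mult.commute)
  hence "8 / (m * (1 - \<eta>)) * (- qp t) \<le> 8 / (m * (1 - \<eta>)) * ((Dl t - Dl (Suc t)) / (\<gamma> * abar))"
    using mM \<eta> by (intro mult_left_mono) auto
  also have "\<dots> = K2 * (Dl t - Dl (Suc t))" by (simp add: K2_def)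
  finally show ?thesis .
qed

definition E1 where "E1 = \<xi> powr \<theta> / (\<zeta> * \<xi>)"
definition \<omega> where "\<omega> = min (1 / (2 * M * E1\<^sup>2)) (\<xi> / 2)"

lemma E1_pos: "E1 > 0" using \<xi>\<zeta> by (simp add: E1_def)
lemma \<omega>_pos: "\<omega> > 0" using E1_pos mM \<xi>\<zeta> by (simp add: \<omega>_def)

lemma qs_global:
  assumes big: "Dl t > \<xi>"
  shows "qs t \<le> - \<omega>"
proof -
  note a = all_fin[of t]
  define D where "D = Dl t"
  have Dp: "D > 0" using big \<xi>\<zeta> by (simp add: D_def)
  have d: "infdist (x t) \<Omega> \<le> E1 * D" using err_global[OF a big] by (simp add: E1_def D_def)
  have d2: "(infdist (x t) \<Omega>)\<^sup>2 \<le> E1\<^sup>2 * D\<^sup>2"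
    using power_mono[OF d infdist_nonneg, of 2] by (simp add: power_mult_distrib)
  have gen: "qs t \<le> - s * D + s\<^sup>2 * M * (E1\<^sup>2 * D\<^sup>2) / 2" if s: "0 \<le> s" "s \<le> 1" for s
  proof -
    have "s\<^sup>2 * M * (infdist (x t) \<Omega>)\<^sup>2 \<le> s\<^sup>2 * M * (E1\<^sup>2 * D\<^sup>2)"
      using d2 mM by (intro mult_left_mono) auto
    thus ?thesis using Qstar_upper[OF a s, of t] by (simp add: D_def)
  qed
  show ?thesis
  proof (cases "M * E1\<^sup>2 * D \<ge> 1")
    case True
    define s where "s = 1 / (M * E1\<^sup>2 * D)"
    have sp: "0 \<le> s" "s \<le> 1" using True by (auto simp: s_def)
    have pos: "M * E1\<^sup>2 * D > 0" using True by simp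
    have "- s * D + s\<^sup>2 * M * (E1\<^sup>2 * D\<^sup>2) / 2 = - 1 / (2 * M * E1\<^sup>2)"
      using pos Dp mM E1_pos by (simp add: s_def field_simps power2_eq_square)
    hence "qs t \<le> - 1 / (2 * M * E1\<^sup>2)" using gen[OF sp] by simp
    moreover have "\<omega> \<le> 1 / (2 * M * E1\<^sup>2)" by (simp add: \<omega>_def)
    ultimately show ?thesis by simp
  next
    case False
    have "qs t \<le> - D + M * (E1\<^sup>2 * D\<^sup>2) / 2" using gen[of 1] by simp
    also have "M * (E1\<^sup>2 * D\<^sup>2) = (M * E1\<^sup>2 * D) * D" by (simp add: power2_eq_square)
    also have "(M * E1\<^sup>2 * D) * D \<le> 1 * D" using False Dp by (intro mult_right_mono) auto
    finally have "qs t \<le> - D / 2" by simp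
    moreover have "\<omega> \<le> \<xi> / 2" by (simp add: \<omega>_def)
    ultimately show ?thesis using big by (simp add: D_def)
  qed
qed

definition B4 where "B4 = \<xi> powr (4 * \<theta> - 1) / \<zeta> ^ 4"
definition \<kappa> where "\<kappa> = min (1 / (2 * M * sqrt B4)) (1 / (2 * sqrt \<xi>))"

lemma B4_pos: "B4 > 0" using \<xi>\<zeta> by (simp add: B4_def)
lemma \<kappa>_pos: "\<kappa> > 0" using B4_pos mM \<xi>\<zeta> by (simp add: \<kappa>_def)

lemma qs_local:
  assumes small: "Dl t \<le> \<xi>"
  shows "qs t \<le> - \<kappa> * (sqrt (Dl t)) ^ 3"
proof -
  note a = all_fin[of t]
  define r where "r = sqrt (Dl t)"
  define b where "b = sqrt B4"
  have r0: "0 \<le> r" unfolding r_def by (rule real_sqrt_ge_zero[OF D_nonneg])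
  have b0: "b > 0" using B4_pos by (simp add: b_def)
  have rD: "r\<^sup>2 = Dl t" unfolding r_def by (rule real_sqrt_pow2[OF D_nonneg])
  have d4: "(infdist (x t) \<Omega>) ^ 4 \<le> B4 * Dl t" using err_local[OF a small] by (simp add: B4_def)
  have e1: "((infdist (x t) \<Omega>)\<^sup>2)\<^sup>2 = (infdist (x t) \<Omega>) ^ 4" by (simp only: power2_eq_square power4_eq_xxxx mult.assoc)
  have e2: "(b * r)\<^sup>2 = B4 * Dl t"
    by (simp only: power_mult_distrib b_def real_sqrt_pow2[OF less_imp_le[OF B4_pos]] rD)
  have "((infdist (x t) \<Omega>)\<^sup>2)\<^sup>2 \<le> (b * r)\<^sup>2" unfolding e1 e2 by (rule d4)
  hence d2: "(infdist (x t) \<Omega>)\<^sup>2 \<le> b * r" by (rule power2_le_imp_le) (use b0 r0 in simp)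
  have gen: "qs t \<le> - s * r\<^sup>2 + s\<^sup>2 * M * (b * r) / 2" if s: "0 \<le> s" "s \<le> 1" for s
  proof -
    have "s\<^sup>2 * M * (infdist (x t) \<Omega>)\<^sup>2 \<le> s\<^sup>2 * M * (b * r)"
      using d2 mM by (intro mult_left_mono) auto
    thus ?thesis using Qstar_upper[OF a s, of t] rD by simp
  qed
  show ?thesis
  proof (cases "r \<le> M * b")
    case True
    define s where "s = r / (M * b)"
    have sp: "0 \<le> s" "s \<le> 1" using True r0 b0 mM by (auto simp: s_def)
    have "- s * r\<^sup>2 + s\<^sup>2 * M * (b * r) / 2 = - (r ^ 3 / (2 * M * b))"
      using b0 mM by (simp add: s_def field_simps power2_eq_square power3_eq_cube)
    hence "qs t \<le> - (r ^ 3 / (2 * M * b))" using gen[OF sp] by simp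
    moreover have "\<kappa> * r ^ 3 \<le> 1 / (2 * M * b) * r ^ 3" using r0 by (intro mult_right_mono) (auto simp: \<kappa>_def b_def)
    ultimately show ?thesis by (simp add: r_def)
  next
    case False
    have "qs t \<le> - r\<^sup>2 + M * (b * r) / 2" using gen[of 1] by simp
    also have "M * (b * r) \<le> r * r"
    proof -
      have "(M * b) * r \<le> r * r" using False r0 by (intro mult_right_mono) auto
      thus ?thesis by (simp add: mult.assoc)
    qed
    finally have q: "qs t \<le> - r\<^sup>2 / 2" by (simp add: power2_eq_square)
    have rx: "r \<le> sqrt \<xi>" using small by (simp add: r_def)
    have sx: "sqrt \<xi> > 0" using \<xi>\<zeta> by simp
    have "\<kappa> * r ^ 3 \<le> 1 / (2 * sqrt \<xi>) * r ^ 3" using r0 by (intro mult_right_mono) (auto simp: \<kappa>_def)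
    also have "\<dots> = (r / sqrt \<xi>) * (r\<^sup>2 / 2)" by (simp add: power2_eq_square power3_eq_cube)
    also have "\<dots> \<le> 1 * (r\<^sup>2 / 2)" using rx sx r0 by (intro mult_right_mono) auto
    finally show ?thesis using q by (simp add: r_def)
  qed
qed

end


context isqa begin

abbreviation u where "u t \<equiv> sqrt (sqrt (Dl t))"

lemma u_props: "0 \<le> u t" "(u t) ^ 4 = Dl t" "(u t) ^ 6 = (sqrt (Dl t)) ^ 3" "u (Suc t) \<le> u t"
proof -
  have D0: "0 \<le> Dl t" by (rule D_nonneg)
  have s0: "0 \<le> sqrt (Dl t)" by (rule real_sqrt_ge_zero[OF D0])
  show "0 \<le> u t" by (rule real_sqrt_ge_zero[OF s0])
  have sq: "(u t)\<^sup>2 = sqrt (Dl t)" by (rule real_sqrt_pow2[OF s0])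
  have "(u t) ^ 4 = ((u t)\<^sup>2)\<^sup>2" by (simp only: power2_eq_square power4_eq_xxxx mult.assoc)
  also have "\<dots> = Dl t" unfolding sq by (rule real_sqrt_pow2[OF D0])
  finally show "(u t) ^ 4 = Dl t" .
  have "(u t) ^ 6 = ((u t)\<^sup>2) ^ 3" by (simp only: power_mult[symmetric]) simp
  thus "(u t) ^ 6 = (sqrt (Dl t)) ^ 3" unfolding sq .
  show "u (Suc t) \<le> u t" using D_mono[of t] by simp
qed

lemma exists_small: "\<exists>T. Dl T \<le> \<xi>"
proof (rule ccontr)
  assume "\<not> ?thesis"
  hence big: "\<And>t. Dl t > \<xi>" by (simp add: not_le)
  have "\<And>t. Dl (Suc t) \<le> Dl t - c1 * \<omega>"
  proof -
    fix t
    have "c1 * \<omega> \<le> c1 * (- qs t)" using qs_global[OF big[of t]] c1_pos by (intro mult_left_mono) auto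
    thus "Dl (Suc t) \<le> Dl t - c1 * \<omega>" using D_dec_qs[of t] by linarith
  qed
  thus False using lin_descent_false[of "\<lambda>t. Dl t" "c1 * \<omega>"] c1_pos \<omega>_pos D_nonneg by auto
qed

lemma local_dec: "Dl t \<le> \<xi> \<Longrightarrow> c1 * \<kappa> * (sqrt (Dl t)) ^ 3 \<le> Dl t - Dl (Suc t)"
proof -
  assume sm: "Dl t \<le> \<xi>"
  have "c1 * (\<kappa> * (sqrt (Dl t)) ^ 3) \<le> c1 * (- qs t)" using qs_local[OF sm] c1_pos by (intro mult_left_mono) auto
  thus ?thesis using D_dec_qs[of t] by (simp add: mult.assoc)
qed

theorem conv: "\<exists>xs \<in> \<Omega>. x \<longlonglongrightarrow> xs"
proof -
  obtain T where T: "Dl T \<le> \<xi>" using exists_small by blast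
  have Dle: "Dl t \<le> \<xi>" if "T \<le> t" for t
    using lift_Suc_antimono_le[of "\<lambda>t. Dl t", OF D_mono that] T by simp
  define c2 where "c2 = c1 * \<kappa>"
  have c2: "c2 > 0" using c1_pos \<kappa>_pos by (simp add: c2_def)
  define C where "C = 4 * sqrt (K2 / c2)"
  have stepb: "norm (x (Suc t) - x t) \<le> C * (u t - u (Suc t))" if "T \<le> t" for t
  proof -
    have dc: "c2 * (u t) ^ 6 \<le> (u t) ^ 4 - (u (Suc t)) ^ 4"
      using local_dec[OF Dle[OF that]] unfolding u_props(2,3) c2_def .
    have SK: "(norm (x (Suc t) - x t))\<^sup>2 \<le> K2 * ((u t) ^ 4 - (u (Suc t)) ^ 4)"
      unfolding u_props(2) by (rule step_sq)
    show ?thesis unfolding C_def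
      by (rule tele_bound[OF u_props(1) u_props(4) norm_ge_zero less_imp_le[OF K2_pos] c2 SK dc])
  qed
  have decu: "decseq u" using u_props(4) by (intro decseq_SucI) auto
  obtain Lu where Lu: "u \<longlonglongrightarrow> Lu" using decseq_convergent[OF decu, of 0] u_props(1) by metis
  have su: "summable (\<lambda>n. C * (u n - u (Suc n)))"
    using summable_mult[OF telescope_summable'[OF Lu], of C] .
  define w where "w = (\<lambda>t. x (Suc t) - x t)"
  have sw: "summable w"
  proof (rule summable_comparison_test_ev[OF _ su])
    show "eventually (\<lambda>n. norm (w n) \<le> C * (u n - u (Suc n))) sequentially"
      unfolding eventually_sequentially w_def using stepb by blast
  qed
  have ps: "(\<lambda>n. x 0 + (\<Sum>i<n. w i)) \<longlonglongrightarrow> x 0 + suminf w"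
    by (intro tendsto_add tendsto_const summable_LIMSEQ[OF sw])
  have "x 0 + (\<Sum>i<n. w i) = x n" for n unfolding w_def sum_lessThan_telescope by simp
  hence xlim: "x \<longlonglongrightarrow> x 0 + suminf w" using ps by simp
  define xs where "xs = x 0 + suminf w"
  have decD: "decseq (\<lambda>t. Dl t)" using D_mono by (intro decseq_SucI) auto
  obtain l where l: "(\<lambda>t. Dl t) \<longlonglongrightarrow> l" "\<And>i. l \<le> Dl i"
    using decseq_convergent[OF decD, of 0] D_nonneg by metis
  have l0: "l \<ge> 0" using LIMSEQ_le_const[OF l(1), of 0] D_nonneg by auto
  have "l = 0"
  proof (rule ccontr)
    assume "l \<noteq> 0"
    hence lp: "l > 0" using l0 by simp
    define \<delta> where "\<delta> = c2 * (sqrt l) ^ 3"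
    have dp: "\<delta> > 0" using lp c2 by (simp add: \<delta>_def)
    have "Dl (Suc (n + T)) \<le> Dl (n + T) - \<delta>" for n
    proof -
      have "(sqrt l) ^ 3 \<le> (sqrt (Dl (n + T))) ^ 3" using l(2)[of "n + T"] lp by (intro power_mono) auto
      hence "\<delta> \<le> c2 * (sqrt (Dl (n + T))) ^ 3" unfolding \<delta>_def using c2 by (intro mult_left_mono) auto
      thus ?thesis using local_dec[OF Dle[of "n + T"]] unfolding c2_def by simp
    qed
    thus False using lin_descent_false[of "\<lambda>n. Dl (n + T)" \<delta>] dp D_nonneg by auto
  qed
  have t1: "(\<lambda>t. (infdist (x t) \<Omega>) ^ 4) \<longlonglongrightarrow> (infdist xs \<Omega>) ^ 4"
    unfolding xs_def by (intro tendsto_power tendsto_infdist xlim)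
  have t2: "(\<lambda>t. B4 * Dl t) \<longlonglongrightarrow> B4 * 0"
    using tendsto_mult[OF tendsto_const l(1)[unfolded \<open>l = 0\<close>], of B4] .
  have "(infdist xs \<Omega>) ^ 4 \<le> B4 * 0"
  proof (rule LIMSEQ_le[OF t1 t2])
    show "\<exists>N. \<forall>n\<ge>N. (infdist (x n) \<Omega>) ^ 4 \<le> B4 * Dl n"
      using err_local[OF all_fin Dle] unfolding B4_def by auto
  qed
  hence "infdist xs \<Omega> = 0" using infdist_nonneg[of xs \<Omega>] by (simp add: power_le_zero_eq)
  hence "xs \<in> \<Omega>" using in_closed_iff_infdist_zero[OF Omega_closed \<Omega>_ne] by simp
  thus ?thesis using xlim unfolding xs_def by blast
qed

end

theorem theorem3:
  fixes f :: "'a::euclidean_space \<Rightarrow> real" and g :: "'a \<Rightarrow> 'a"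
    and \<Psi> :: "'a \<Rightarrow> ereal"
    and L m M \<eta> \<xi> \<zeta> \<theta> \<gamma> \<beta> :: real
    and H :: "nat \<Rightarrow> 'a \<Rightarrow> 'a" and x p :: "nat \<Rightarrow> 'a" and \<alpha> :: "nat \<Rightarrow> real"
    and Fstar :: ereal and \<Omega> :: "'a set"
  assumes Fstar_def: "Fstar = (INF y. Fobj f \<Psi> y)"
    and \<Omega>_def: "\<Omega> = {y. Fobj f \<Psi> y = Fstar}"
    and \<Omega>_ne: "\<Omega> \<noteq> {}"
    and f_convex: "convex_on UNIV f"
    and L_pos: "L > 0" and f_smooth: "L_smooth L f g"
    and \<Psi>_convex: "ext_convex \<Psi>" and \<Psi>_proper: "ext_proper \<Psi>" and \<Psi>_lsc: "ext_lsc \<Psi>"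
    and \<gamma>: "0 < \<gamma>" "\<gamma> < 1" and \<beta>: "0 < \<beta>" "\<beta> < 1"
    and x0_dom: "\<Psi> (x 0) \<noteq> \<infinity>"
    and mM: "0 < m" "m \<le> M"
    and H_lin: "\<And>t. linear (H t)"
    and H_sa: "\<And>t u v. H t u \<bullet> v = u \<bullet> H t v"
    and H_bounds: "\<And>t v. m * (norm v)\<^sup>2 \<le> v \<bullet> H t v \<and> v \<bullet> H t v \<le> M * (norm v)\<^sup>2"
    and \<eta>: "0 \<le> \<eta>" "\<eta> < 1"
    and inexact: "\<And>t. Qmodel g \<Psi> (H t) (x t) (p t) - Qstar g \<Psi> (H t) (x t)
                        \<le> - ereal \<eta> * Qstar g \<Psi> (H t) (x t)"
    and \<alpha>_def: "\<And>t. \<alpha> t = \<beta> ^ (LEAST k. Fobj f \<Psi> (x t + (\<beta> ^ k) *\<^sub>R p t)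
                        \<le> Fobj f \<Psi> (x t) + ereal (\<gamma> * \<beta> ^ k) * Qmodel g \<Psi> (H t) (x t) (p t))"
    and x_step: "\<And>t. x (Suc t) = x t + \<alpha> t *\<^sub>R p t"
    and \<xi>\<zeta>: "\<xi> > 0" "\<zeta> > 0" and \<theta>: "1/4 < \<theta>" "\<theta> \<le> 1"
    and error_bound: "\<And>y. Fobj f \<Psi> y - Fstar \<le> ereal \<xi> \<Longrightarrow>
                        \<zeta> * infdist y \<Omega> \<le> (real_of_ereal (Fobj f \<Psi> y - Fstar)) powr \<theta>"
  shows "\<exists>xs \<in> \<Omega>. x \<longlonglongrightarrow> xs"
  using isqa.conv[OF isqa.intro[OF assms]] .

end
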